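(* Let $C>0$ and $\delta>0$, let $f \in C((0,\infty);(0,\infty))$ be asymptotically increasing with $\lim_{x\to\infty} f(x)/x = \infty$, and let $\psi \in C([-\delta,0];(0,\infty))$. Consider \[ z'(t) = C\int_{t-\delta}^t f(z(s))\,ds, \quad t\ge 0; \qquad z(t)=\psi(t), \quad t\in[-\delta,0]. \] If the solution satisfies $z \in C([-\delta,\infty);(0,\infty))$ and $\bar F(x) = \int_0^x f(s)\,ds$ for $x>0$, then \[ \lim_{t\to\infty} \frac{\bar F(z(t-\delta))}{\bar F(z(t))} = 0. \]
   Context: "$f$ is asymptotically increasing" means that there is a continuous increasing function $\phi:(0,\infty)\to(0,\infty)$ with $f(x)/\phi(x)\to 1$ as $x\to\infty$. *)

theory Defs
  imports "HOL-Analysis.Analysis"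
begin

definition asymp_increasing :: "(real \<Rightarrow> real) \<Rightarrow> bool" where
  "asymp_increasing f \<longleftrightarrow>
     (\<exists>\<phi>::real \<Rightarrow> real. continuous_on {0<..} \<phi> \<and> (\<forall>x>0. \<phi> x > 0) \<and>
        strict_mono_on {0<..} \<phi> \<and> ((\<lambda>x. f x / \<phi> x) \<longlongrightarrow> 1) at_top)"

end

theory Submission
  imports Defs
begin

lemma fbar_nonneg:
  fixes f Fbar :: "real \<Rightarrow> real"
  assumes f_pos: "\<forall>x>0. f x > 0" and f_int: "\<forall>x>0. f integrable_on {0..x}"
    and Fbar_def: "\<forall>x>0. Fbar x = integral {0..x} f" and x: "x > 0"
  shows "Fbar x \<ge> 0"
proof -
  define g where "g y = (if y = 0 then 0 else f y)" for y
  have neg: "negligible {0::real}" by simp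
  have eq: "\<And>y. y \<in> {0..x} - {0} \<Longrightarrow> g y = f y" by (auto simp: g_def)
  have gi: "g integrable_on {0..x}" using integrable_spike[OF f_int[rule_format, OF x] neg eq] .
  have eqI: "integral {0..x} f = integral {0..x} g" by (rule integral_spike[OF neg eq])
  have "integral {0..x} g \<ge> 0"
  proof (rule integral_nonneg[OF gi])
    fix y assume y: "y \<in> {0..x}"
    show "0 \<le> g y"
    proof (cases "y = 0")
      case True thus ?thesis by (simp add: g_def)
    next
      case False
      hence "y > 0" using y by auto
      hence "f y > 0" using f_pos by blast
      thus ?thesis using False by (simp add: g_def)
    qed
  qed
  thus ?thesis using eqI Fbar_def x by simp
qed

lemma fbar_ratio:
  fixes f \<phi> Fbar :: "real \<Rightarrow> real" and \<epsilon> :: real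
  assumes f_pos: "\<forall>x>0. f x > 0"
    and phi_pos: "\<forall>x>0. \<phi> x > 0" and phi_mono: "strict_mono_on {0<..} \<phi>"
    and lim: "((\<lambda>x. f x / \<phi> x) \<longlongrightarrow> 1) at_top"
    and f_superlin: "filterlim (\<lambda>x. f x / x) at_top at_top"
    and f_int: "\<forall>x>0. f integrable_on {0..x}"
    and Fbar_def: "\<forall>x>0. Fbar x = integral {0..x} f"
    and eps: "\<epsilon> > 0"
  shows "\<exists>A>0. \<exists>N>1. \<forall>a b. A \<le> a \<longrightarrow> N*a \<le> b \<longrightarrow> 0 \<le> Fbar a / Fbar b \<and> Fbar a / Fbar b < \<epsilon>"
proof -
  have "eventually (\<lambda>x. dist (f x / \<phi> x) 1 < 1/2) at_top"
    using tendstoD[OF lim, of "1/2"] by simp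
  then obtain X1 where X1: "\<forall>x\<ge>X1. dist (f x / \<phi> x) 1 < 1/2"
    by (auto simp: eventually_at_top_linorder)
  have "eventually (\<lambda>x. 1 \<le> f x / x) at_top"
    using f_superlin by (simp add: filterlim_at_top)
  then obtain X2 where X2: "\<forall>x\<ge>X2. 1 \<le> f x / x"
    by (auto simp: eventually_at_top_linorder)
  define X where "X = max (max X1 X2) 1"
  have Xpos: "X > 0" by (simp add: X_def)
  have fphi: "\<phi> y / 2 < f y \<and> f y < 2 * \<phi> y" if "y \<ge> X" for y
  proof -
    have y0: "y > 0" "\<phi> y > 0" using that Xpos phi_pos by auto
    have "\<bar>f y / \<phi> y - 1\<bar> < 1/2" using X1 that by (simp add: X_def dist_real_def)
    hence "1/2 < f y / \<phi> y" "f y / \<phi> y < 2" unfolding abs_less_iff by linarith+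
    thus ?thesis using y0 by (simp add: field_simps)
  qed
  have fx: "f y \<ge> y" if "y \<ge> X" for y
  proof -
    have "X2 \<le> y" using that by (simp add: X_def)
    hence "1 \<le> f y / y" using X2 by blast
    moreover have "y > 0" using that Xpos by auto
    ultimately show ?thesis by (simp add: field_simps)
  qed
  have phile: "\<phi> y \<le> \<phi> a" if "0 < y" "y \<le> a" for y a
    using phi_mono that unfolding strict_mono_on_def by (cases "y = a") (auto intro: less_imp_le)
  define K where "K = Fbar X"
  define N where "N = 2 + 2 * (\<bar>K\<bar> + 2) / \<epsilon>"
  define A where "A = max X 2"
  have "2 * (\<bar>K\<bar> + 2) / \<epsilon> > 0" using eps by (intro divide_pos_pos) auto
  hence N1: "N > 1" unfolding N_def by linarith
  have N2: "N \<ge> 2" using \<open>2 * (\<bar>K\<bar> + 2) / \<epsilon> > 0\<close> unfolding N_def by linarith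
  have main: "0 \<le> Fbar a / Fbar b \<and> Fbar a / Fbar b < \<epsilon>" if a: "A \<le> a" and b: "N*a \<le> b" for a b
  proof -
    have aX: "X \<le> a" and a2: "2 \<le> a" using a by (auto simp: A_def)
    have a0: "a > 0" using a2 by simp
    have ba: "(N - 1) * a \<le> b - a" using b by (simp add: algebra_simps)
    have Na: "a \<le> (N-1) * a" using mult_right_mono[of 1 "N-1" a] N2 a0 by simp
    have b0: "b > a" using ba Na a0 by linarith
    have pa: "\<phi> a > 0" using phi_pos a0 by auto
    have fa: "a \<le> f a" using fx aX by blast
    have phia: "a / 2 < \<phi> a" using fphi[OF aX] fa by linarith
    define P where "P = a * \<phi> a"
    have P1: "P \<ge> 1"
    proof -
      have "a * (a/2) \<le> a * \<phi> a" using phia a0 by (intro mult_left_mono) auto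
      moreover have "1 \<le> a * (a/2)" using mult_mono[of 2 a 2 a] a2 by simp
      ultimately show ?thesis by (simp add: P_def)
    qed
    have ia: "f integrable_on {0..a}" using f_int a0 by blast
    have ib: "f integrable_on {0..b}" using f_int b0 a0 by auto
    have split1: "Fbar a = K + integral {X..a} f"
      using Henstock_Kurzweil_Integration.integral_combine[OF _ aX ia] Xpos Fbar_def a0 by (simp add: K_def)
    have up: "integral {X..a} f \<le> (a - X) * (2 * \<phi> a)"
    proof -
      have "integral {X..a} f \<le> integral {X..a} (\<lambda>_. 2 * \<phi> a)"
      proof (rule integral_le)
        show "f integrable_on {X..a}" using integrable_subinterval_real[OF ia] Xpos by auto
        show "(\<lambda>_. 2 * \<phi> a) integrable_on {X..a}" by auto
        fix y assume "y \<in> {X..a}"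
        hence "X \<le> y" "y \<le> a" by auto
        hence "f y < 2 * \<phi> y" "\<phi> y \<le> \<phi> a" using fphi[of y] phile[of y a] Xpos by auto
        thus "f y \<le> 2 * \<phi> a" by linarith
      qed
      thus ?thesis using aX by (simp add: algebra_simps)
    qed
    have Fa_up: "Fbar a \<le> (\<bar>K\<bar> + 2) * P"
    proof -
      have "(a - X) * (2 * \<phi> a) \<le> 2 * P" using Xpos pa by (simp add: P_def algebra_simps)
      hence "Fbar a \<le> \<bar>K\<bar> + 2 * P" using split1 up by linarith
      also have "\<dots> \<le> (\<bar>K\<bar> + 2) * P" using mult_left_mono[OF P1, of "\<bar>K\<bar>"] by (simp add: algebra_simps)
      finally show ?thesis .
    qed
    have Fa0: "Fbar a \<ge> 0" by (rule fbar_nonneg[OF f_pos f_int Fbar_def a0])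
    have split2: "Fbar b = Fbar a + integral {a..b} f"
      using Henstock_Kurzweil_Integration.integral_combine[OF _ _ ib, of a] a0 b0 Fbar_def by simp
    have lo: "integral {a..b} f \<ge> (b - a) * (\<phi> a / 2)"
    proof -
      have "integral {a..b} f \<ge> integral {a..b} (\<lambda>_. \<phi> a / 2)"
      proof (rule integral_le)
        show "f integrable_on {a..b}" using integrable_subinterval_real[OF ib] a0 by auto
        show "(\<lambda>_. \<phi> a / 2) integrable_on {a..b}" by auto
        fix y assume "y \<in> {a..b}"
        hence "a \<le> y" by auto
        hence "\<phi> y / 2 < f y" "\<phi> a \<le> \<phi> y" using fphi[of y] phile[of a y] aX a0 by auto
        thus "\<phi> a / 2 \<le> f y" by linarith
      qed
      thus ?thesis using b0 by simp
    qed
    have "(N - 1) * a * (\<phi> a / 2) \<le> (b - a) * (\<phi> a / 2)"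
      using ba pa by (intro mult_right_mono) auto
    hence Fb_lo: "Fbar b \<ge> (N - 1) * P / 2" using split2 lo Fa0 by (simp add: P_def)
    have "(N - 1) * P / 2 > 0" using N1 P1 by simp
    hence Fb0: "Fbar b > 0" using Fb_lo by linarith
    have "Fbar a / Fbar b \<le> (\<bar>K\<bar> + 2) * P / ((N - 1) * P / 2)"
      by (rule frac_le[OF _ Fa_up _ Fb_lo]) (use N1 P1 in simp_all)
    also have "\<dots> = 2 * (\<bar>K\<bar> + 2) / (N - 1)"
    proof -
      have "N - 1 \<noteq> 0" "P \<noteq> 0" using N1 P1 by auto
      thus ?thesis by (simp add: field_simps)
    qed
    also have "\<dots> < \<epsilon>"
    proof -
      have "N - 1 > 2 * (\<bar>K\<bar> + 2) / \<epsilon>" by (simp add: N_def)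
      hence "2 * (\<bar>K\<bar> + 2) < (N - 1) * \<epsilon>" using eps by (simp add: pos_divide_less_eq)
      hence "2 * (\<bar>K\<bar> + 2) < \<epsilon> * (N - 1)" by (simp add: mult.commute)
      thus ?thesis using N1 by (simp add: pos_divide_less_eq)
    qed
    finally have "Fbar a / Fbar b < \<epsilon>" .
    moreover have "0 \<le> Fbar a / Fbar b" using Fa0 Fb0 by (rule divide_nonneg_pos)
    ultimately show ?thesis by blast
  qed
  have "A > 0" by (simp add: A_def)
  thus ?thesis using main N1 by blast
qed
theorem lemma6p2:
  fixes C \<delta> :: real and f \<psi> z Fbar :: "real \<Rightarrow> real"
  assumes C_pos: "C > 0" and delta_pos: "\<delta> > 0"
    and f_cont: "continuous_on {0<..} f" and f_pos: "\<forall>x>0. f x > 0"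
    and f_asymp: "asymp_increasing f"
    and f_superlin: "filterlim (\<lambda>x. f x / x) at_top at_top"
    and psi_cont: "continuous_on {-\<delta>..0} \<psi>" and psi_pos: "\<forall>t\<in>{-\<delta>..0}. \<psi> t > 0"
    and z_cont: "continuous_on {-\<delta>..} z" and z_pos: "\<forall>t\<ge>-\<delta>. z t > 0"
    and z_init: "\<forall>t\<in>{-\<delta>..0}. z t = \<psi> t"
    and z_ode: "\<forall>t\<ge>0. (z has_real_derivative
                   C * integral {t-\<delta>..t} (\<lambda>s. f (z s))) (at t within {0..})"
    and f_int: "\<forall>x>0. f integrable_on {0..x}"
    and Fbar_def: "\<forall>x>0. Fbar x = integral {0..x} f"
  shows "((\<lambda>t. Fbar (z (t - \<delta>)) / Fbar (z t)) \<longlongrightarrow> 0) at_top"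
proof -
  define D where "D t = C * integral {t-\<delta>..t} (\<lambda>s. f (z s))" for t
  have fzc: "continuous_on {a..b} (\<lambda>s. f (z s))" if "-\<delta> \<le> a" for a b
  proof (rule continuous_on_compose2[OF f_cont])
    show "continuous_on {a..b} z" using continuous_on_subset[OF z_cont] that by auto
    show "z ` {a..b} \<subseteq> {0<..}" using z_pos that by auto
  qed
  have fzi: "(\<lambda>s. f (z s)) integrable_on {a..b}" if "-\<delta> \<le> a" for a b
    using integrable_continuous_interval[OF fzc[OF that]] .
  have fzp: "f (z s) > 0" if "s \<ge> -\<delta>" for s using f_pos z_pos that by auto
  have Dnn: "D t \<ge> 0" if "t \<ge> 0" for t
  proof -
    have "integral {t-\<delta>..t} (\<lambda>s. f (z s)) \<ge> 0"
      using that fzp by (intro integral_nonneg fzi) (auto intro: less_imp_le)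
    thus ?thesis using C_pos by (simp add: D_def)
  qed
  have mvt: "\<exists>\<xi>\<in>{a..b}. z b - z a = (b - a) * D \<xi>" if "0 \<le> a" "a \<le> b" for a b
  proof -
    have "\<exists>\<xi>\<in>{a..b}. z b - z a = (\<lambda>h. D \<xi> * h) (b - a)"
    proof (rule mvt_very_simple[OF that(2)])
      fix x assume "a \<le> x" "x \<le> b"
      hence "(z has_real_derivative D x) (at x within {0..})" using z_ode that by (simp add: D_def)
      hence "(z has_real_derivative D x) (at x within {a..b})"
        by (rule has_field_derivative_subset) (use that in auto)
      thus "(z has_derivative (\<lambda>h. D x * h)) (at x within {a..b})"
        by (simp add: has_field_derivative_def)
    qed
    thus ?thesis by (auto simp: mult.commute)
  qed
  have zmono: "z a \<le> z b" if ab: "0 \<le> a" "a \<le> b" for a b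
  proof -
    obtain \<xi> where "\<xi> \<in> {a..b}" "z b - z a = (b - a) * D \<xi>" using mvt[OF ab] by blast
    moreover have "D \<xi> \<ge> 0" using Dnn \<open>\<xi> \<in> {a..b}\<close> ab by auto
    ultimately show ?thesis using ab by (simp add: zero_le_mult_iff) (smt (verit) mult_nonneg_nonneg)
  qed
  have "eventually (\<lambda>x. 1 \<le> f x / x) at_top"
    using f_superlin by (simp add: filterlim_at_top)
  then obtain X1 where X1: "\<forall>x\<ge>X1. 1 \<le> f x / x"
    by (auto simp: eventually_at_top_linorder)
  define z0 where "z0 = z 0"
  have z00: "z0 > 0" using z_pos delta_pos by (simp add: z0_def)
  define X' where "X' = max X1 z0"
  have fcX: "continuous_on {z0..X'} f" by (rule continuous_on_subset[OF f_cont]) (use z00 in auto)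
  have neX: "{z0..X'} \<noteq> {}" by (auto simp: X'_def)
  obtain xm where xm: "xm \<in> {z0..X'}" "\<forall>y\<in>{z0..X'}. f xm \<le> f y"
    using continuous_attains_inf[OF compact_Icc neX fcX] by blast
  define m where "m = min (f xm) z0"
  have m0: "m > 0" using xm f_pos z00 by (auto simp: m_def)
  have fm: "f x \<ge> m" if "x \<ge> z0" for x
  proof (cases "x \<le> X'")
    case True
    hence "f xm \<le> f x" using xm(2) that by auto
    thus ?thesis by (simp add: m_def)
  next
    case False
    hence "X1 \<le> x" by (auto simp: X'_def)
    hence h1: "1 \<le> f x / x" using X1 by blast
    have "x > 0" using z00 that by auto
    hence "f x \<ge> x" using h1 by (simp add: field_simps)
    thus ?thesis using that by (auto simp: m_def)
  qed
  have Dlo: "D \<xi> \<ge> C * (\<delta> * m)" if "\<xi> \<ge> \<delta>" for \<xi>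
  proof -
    have "integral {\<xi>-\<delta>..\<xi>} (\<lambda>s. f (z s)) \<ge> integral {\<xi>-\<delta>..\<xi>} (\<lambda>_. m)"
    proof (rule integral_le)
      show "(\<lambda>s. f (z s)) integrable_on {\<xi>-\<delta>..\<xi>}" using fzi that delta_pos by auto
      show "(\<lambda>_. m) integrable_on {\<xi>-\<delta>..\<xi>}" by auto
      fix u assume "u \<in> {\<xi>-\<delta>..\<xi>}"
      hence "z u \<ge> z0" using zmono[of 0 u] that by (auto simp: z0_def)
      thus "m \<le> f (z u)" by (rule fm)
    qed
    thus ?thesis using C_pos delta_pos by (simp add: D_def)
  qed
  have zinf: "\<exists>T\<ge>0. \<forall>t\<ge>T. z t \<ge> B" for B
  proof -
    define T where "T = \<delta> + \<bar>B\<bar> / (C * (\<delta> * m))"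
    have cpos: "C * (\<delta> * m) > 0" using C_pos delta_pos m0 by simp
    have "z t \<ge> B" if "t \<ge> T" for t
    proof -
      have "\<bar>B\<bar> / (C * (\<delta> * m)) \<ge> 0" using cpos by simp
      hence tT: "t \<ge> \<delta>" using that unfolding T_def by linarith
      obtain \<xi> where xi: "\<xi> \<in> {\<delta>..t}" "z t - z \<delta> = (t - \<delta>) * D \<xi>"
        using mvt[OF _ tT] delta_pos by auto
      have "(t - \<delta>) * (C * (\<delta> * m)) \<le> (t - \<delta>) * D \<xi>"
        using Dlo[of \<xi>] xi tT by (intro mult_left_mono) auto
      moreover have "\<bar>B\<bar> \<le> (t - \<delta>) * (C * (\<delta> * m))"
      proof -
        have "\<bar>B\<bar> / (C * (\<delta> * m)) \<le> t - \<delta>" using that unfolding T_def by linarith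
        thus ?thesis using cpos by (simp add: pos_divide_le_eq)
      qed
      moreover have "z \<delta> > 0" using z_pos delta_pos by auto
      ultimately show ?thesis using xi by linarith
    qed
    moreover have "T \<ge> 0" using delta_pos cpos by (simp add: T_def)
    ultimately show ?thesis by blast
  qed
  have zgrow: "\<exists>T. \<forall>t\<ge>T. z t \<ge> N * z (t - \<delta>)" for N
  proof -
    define M where "M = 4 * \<bar>N\<bar> / (C * \<delta>^2) + 1"
    have "4 * \<bar>N\<bar> / (C * \<delta>^2) \<ge> 0" using C_pos delta_pos by (intro divide_nonneg_pos) auto
    hence M0: "M > 0" unfolding M_def by linarith
    have MN: "C * \<delta>^2 * M / 4 \<ge> \<bar>N\<bar>" using C_pos delta_pos by (simp add: M_def field_simps)
    have "eventually (\<lambda>x. M \<le> f x / x) at_top"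
      using f_superlin by (simp add: filterlim_at_top)
    then obtain Xm where Xm: "\<forall>x\<ge>Xm. M \<le> f x / x"
      by (auto simp: eventually_at_top_linorder)
    obtain T0 where T0: "T0 \<ge> 0" "\<forall>t\<ge>T0. z t \<ge> Xm" using zinf by blast
    have "z t \<ge> N * z (t - \<delta>)" if "t \<ge> T0 + 2 * \<delta>" for t
    proof -
      have t1: "0 \<le> t - \<delta>/2" "t - \<delta>/2 \<le> t" using that T0 delta_pos by auto
      obtain \<xi> where xi: "\<xi> \<in> {t - \<delta>/2..t}" "z t - z (t - \<delta>/2) = (t - (t - \<delta>/2)) * D \<xi>"
        using mvt[OF t1] by blast
      have ge: "f (z u) \<ge> M * z (t - \<delta>)" if "u \<in> {\<xi> - \<delta>/2..\<xi>}" for u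
      proof -
        have u: "u \<ge> t - \<delta>" "t - \<delta> \<ge> T0" using that xi \<open>t \<ge> T0 + 2 * \<delta>\<close> delta_pos by auto
        have zu: "z u \<ge> z (t - \<delta>)" using zmono[of "t - \<delta>" u] u T0 by auto
        have zx: "z u \<ge> Xm" using T0 u by auto
        have zp: "z u > 0" using z_pos u T0 delta_pos by auto
        have "M \<le> f (z u) / z u" using Xm zx by auto
        hence "M * z u \<le> f (z u)" using zp by (simp add: field_simps)
        moreover have "M * z (t - \<delta>) \<le> M * z u" using zu M0 by simp
        ultimately show ?thesis by linarith
      qed
      have "integral {\<xi>-\<delta>..\<xi>} (\<lambda>s. f (z s)) \<ge> integral {\<xi>-\<delta>/2..\<xi>} (\<lambda>s. f (z s))"
      proof (rule integral_subset_le)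
        show "{\<xi> - \<delta> / 2..\<xi>} \<subseteq> {\<xi> - \<delta>..\<xi>}" using delta_pos by auto
        show "(\<lambda>s. f (z s)) integrable_on {\<xi> - \<delta> / 2..\<xi>}" using fzi xi t1 delta_pos by auto
        show "(\<lambda>s. f (z s)) integrable_on {\<xi> - \<delta>..\<xi>}" using fzi xi t1 by auto
        show "\<forall>x\<in>{\<xi> - \<delta>..\<xi>}. 0 \<le> f (z x)" using fzp xi t1 by (auto intro: less_imp_le)
      qed
      moreover have "integral {\<xi>-\<delta>/2..\<xi>} (\<lambda>s. f (z s)) \<ge> integral {\<xi>-\<delta>/2..\<xi>} (\<lambda>_. M * z (t - \<delta>))"
      proof (rule integral_le)
        show "(\<lambda>s. f (z s)) integrable_on {\<xi> - \<delta> / 2..\<xi>}" using fzi xi t1 delta_pos by auto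
        show "(\<lambda>_. M * z (t - \<delta>)) integrable_on {\<xi> - \<delta> / 2..\<xi>}" by auto
      qed (rule ge)
      moreover have "integral {\<xi>-\<delta>/2..\<xi>} (\<lambda>_. M * z (t - \<delta>)) = \<delta>/2 * (M * z (t - \<delta>))"
        using delta_pos by simp
      ultimately have "integral {\<xi>-\<delta>..\<xi>} (\<lambda>s. f (z s)) \<ge> \<delta>/2 * (M * z (t - \<delta>))"
        by linarith
      hence "D \<xi> \<ge> C * (\<delta>/2 * (M * z (t - \<delta>)))" using C_pos by (simp add: D_def)
      hence "\<delta>/2 * (C * (\<delta>/2 * (M * z (t - \<delta>)))) \<le> \<delta>/2 * D \<xi>"
        using delta_pos by (intro mult_left_mono) auto
      moreover have "z t - z (t - \<delta>/2) = \<delta>/2 * D \<xi>" using xi(2) by simp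
      ultimately have "z t - z (t - \<delta>/2) \<ge> \<delta>/2 * (C * (\<delta>/2 * (M * z (t - \<delta>))))"
        by linarith
      moreover have "z (t - \<delta>/2) > 0" using z_pos t1 delta_pos by auto
      moreover have "\<delta>/2 * (C * (\<delta>/2 * (M * z (t - \<delta>)))) = (C * \<delta>^2 * M / 4) * z (t - \<delta>)"
        by (simp add: power2_eq_square)
      moreover have "(C * \<delta>^2 * M / 4) * z (t - \<delta>) \<ge> N * z (t - \<delta>)"
        using MN z_pos[rule_format, of "t - \<delta>"] t1 delta_pos
        by (intro mult_right_mono) auto
      ultimately show ?thesis by linarith
    qed
    thus ?thesis by blast
  qed
  obtain \<phi> where phi: "continuous_on {0<..} \<phi>" "\<forall>x>0. \<phi> x > 0" "strict_mono_on {0<..} \<phi>"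
     "((\<lambda>x. f x / \<phi> x) \<longlongrightarrow> 1) at_top"
    using f_asymp unfolding asymp_increasing_def by blast
  show ?thesis
  proof (rule tendstoI)
    fix e :: real assume e: "e > 0"
    obtain A N where AN: "A > 0" "N > 1"
      "\<forall>a b. A \<le> a \<longrightarrow> N*a \<le> b \<longrightarrow> 0 \<le> Fbar a / Fbar b \<and> Fbar a / Fbar b < e"
      using fbar_ratio[OF f_pos phi(2) phi(3) phi(4) f_superlin f_int Fbar_def e] by blast
    obtain T1 where T1: "\<forall>t\<ge>T1. z t \<ge> A" using zinf by blast
    obtain T2 where T2: "\<forall>t\<ge>T2. z t \<ge> N * z (t - \<delta>)" using zgrow by blast
    have "\<forall>t\<ge>max (T1 + \<delta>) T2. dist (Fbar (z (t - \<delta>)) / Fbar (z t)) 0 < e"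
    proof (intro allI impI)
      fix t assume t: "t \<ge> max (T1 + \<delta>) T2"
      hence "A \<le> z (t - \<delta>)" "N * z (t - \<delta>) \<le> z t" using T1 T2 by auto
      hence "0 \<le> Fbar (z (t - \<delta>)) / Fbar (z t) \<and> Fbar (z (t - \<delta>)) / Fbar (z t) < e"
        using AN(3) by blast
      thus "dist (Fbar (z (t - \<delta>)) / Fbar (z t)) 0 < e" unfolding dist_real_def by (simp only: diff_0_right abs_of_nonneg)
    qed
    thus "eventually (\<lambda>t. dist (Fbar (z (t - \<delta>)) / Fbar (z t)) 0 < e) at_top"
      unfolding eventually_at_top_linorder by blast
  qed
qed

end
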